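(* Fix a prior $\mu$ in the relative interior of $\Delta$ and suppose the updating rule respects the Blackwell order for $\mu$ and $\varphi=\varphi^{\mu}$ is continuous on $\Delta$. (a) If there are at least three states ($n\ge3$), then either there is $x^*\in\Delta$ with $\varphi(x)=x^*$ for all $x\in\Delta$, or $\varphi(x)=x$ for all $x\in\Delta$. (b) If there are two states ($n=2$), then the updating rule is occasionally coarse for $\mu$ with $\varphi(0)=a$ and $\varphi(1)=b$, i.e. there exist $0\le a\le b\le 1$ with $\varphi(x)=a$ for $x\in[0,a)$, $\varphi(x)=x$ for $x\in[a,b]$, and $\varphi(x)=b$ for $x\in(b,1]$.
   Context: Let $\Theta$ be a finite set of states, $|\Theta|=n\ge2$, and $\Delta=\Delta(\Theta)$ the simplex of beliefs, viewed as a subset of $\mathbb{R}^{n-1}$ with the Euclidean metric; for $n=2$, $\Theta=\{0,1\}$ and a belief is identified with the probability of state $1$, so $\Delta=[0,1]$. An experiment $\pi:\Theta\to\Delta(S)$ ($S$ finite) with prior $\mu$ induces the Bayesian distribution over posteriors $\rho_B$, a finitely supported distribution on $\Delta$ with mean $\mu$ (every such distribution arises from some experiment). Blackwell order: $\pi\succeq\pi'$ iff $\rho_B'$ is a mean-preserving contraction of $\rho_B$. An updating rule is given, for each prior $\mu$, by a distortion function $\varphi^{\mu}:\Delta\to\Delta$: when the Bayesian posterior is $x$, the decision maker holds belief $\varphi^{\mu}(x)$. For a compact action set $A$, continuous $u:A\times\Theta\to\mathbb{R}$, and consistent choice $a^*:\Delta\to A$ (i.e. $a^*(y)\in\arg\max_{a}\mathbb{E}_y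 u(a,\theta)$ for all $y$), let $W(x)=\mathbb{E}_x u(a^*(\varphi^{\mu}(x)),\theta)$. The rule respects the Blackwell order for $\mu$ if for all such $A,u,a^*$ and all $\pi\succeq\pi'$, $\mathbb{E}_{\rho_B}W\ge\mathbb{E}_{\rho_B'}W$. For $n=2$, occasionally coarse means: there exist $0\le a\le b\le1$ with $\varphi(x)=a$ for $x\in(0,a)$, $\varphi(x)=b$ for $x\in(b,1)$, $\varphi(x)=x$ for $x\in[a,b]$, $\varphi(0)\le a$, $\varphi(1)\ge b$. *)

theory Defs
  imports "HOL-Probability.Probability"
begin

definition beliefs :: "(real^'n::finite) set" where
  "beliefs = {p. (\<forall>i. 0 \<le> p $ i) \<and> (\<Sum>i\<in>UNIV. p $ i) = 1}"

text \<open>An experiment: for each state a signal distribution with finite support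
  (signals are drawn from nat; any finite signal set embeds into nat).\<close>

definition is_experiment :: "('n::finite \<Rightarrow> nat pmf) \<Rightarrow> bool" where
  "is_experiment \<pi> \<longleftrightarrow> (\<forall>\<theta>. finite (set_pmf (\<pi> \<theta>)))"

definition prior_pmf :: "real^'n::finite \<Rightarrow> 'n pmf" where
  "prior_pmf \<mu> = embed_pmf (\<lambda>\<theta>. \<mu> $ \<theta>)"

definition signal_pmf :: "real^'n::finite \<Rightarrow> ('n \<Rightarrow> nat pmf) \<Rightarrow> nat pmf" where
  "signal_pmf \<mu> \<pi> = bind_pmf (prior_pmf \<mu>) \<pi>"

definition posterior :: "real^'n::finite \<Rightarrow> ('n \<Rightarrow> nat pmf) \<Rightarrow> nat \<Rightarrow> real^'n" where
  "posterior \<mu> \<pi> s = (\<chi> \<theta>. \<mu> $ \<theta> * pmf (\<pi> \<theta>) s / pmf (signal_pmf \<mu> \<pi>) s)"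

definition bayes_dist :: "real^'n::finite \<Rightarrow> ('n \<Rightarrow> nat pmf) \<Rightarrow> (real^'n) pmf" where
  "bayes_dist \<mu> \<pi> = map_pmf (posterior \<mu> \<pi>) (signal_pmf \<mu> \<pi>)"

text \<open>\<rho>' is a mean-preserving contraction of \<rho> (i.e. \<rho> is a mean-preserving spread of \<rho>'):
  \<rho> is obtained from \<rho>' by splitting every point y into a distribution with mean y.\<close>

definition mpc :: "('a::euclidean_space) pmf \<Rightarrow> 'a pmf \<Rightarrow> bool" where
  "mpc \<rho>' \<rho> \<longleftrightarrow> (\<exists>K. \<rho> = bind_pmf \<rho>' K \<and>
      (\<forall>y\<in>set_pmf \<rho>'. measure_pmf.expectation (K y) (\<lambda>x. x) = y))"

definition blackwell_geq :: "real^'n::finite \<Rightarrow> ('n \<Rightarrow> nat pmf) \<Rightarrow> ('n \<Rightarrow> nat pmf) \<Rightarrow> bool" where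
  "blackwell_geq \<mu> \<pi> \<pi>' \<longleftrightarrow> mpc (bayes_dist \<mu> \<pi>') (bayes_dist \<mu> \<pi>)"

definition exp_util :: "('a \<Rightarrow> 'n::finite \<Rightarrow> real) \<Rightarrow> real^'n \<Rightarrow> 'a \<Rightarrow> real" where
  "exp_util u y a = (\<Sum>\<theta>\<in>UNIV. y $ \<theta> * u a \<theta>)"

definition decision_problem ::
  "(real^'n::finite) set \<Rightarrow> (real^'n \<Rightarrow> 'n \<Rightarrow> real) \<Rightarrow> (real^'n \<Rightarrow> real^'n) \<Rightarrow> bool" where
  "decision_problem A u astar \<longleftrightarrow> compact A \<and> A \<noteq> {} \<and>
     (\<forall>\<theta>. continuous_on A (\<lambda>a. u a \<theta>)) \<and>
     (\<forall>y\<in>beliefs. astar y \<in> A \<and> (\<forall>a\<in>A. exp_util u y a \<le> exp_util u y (astar y)))"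

definition welfare ::
  "(real^'n::finite \<Rightarrow> real^'n) \<Rightarrow> (real^'n \<Rightarrow> 'n \<Rightarrow> real) \<Rightarrow> (real^'n \<Rightarrow> real^'n)
    \<Rightarrow> real^'n \<Rightarrow> real" where
  "welfare \<phi> u astar x = exp_util u x (astar (\<phi> x))"

definition respects_blackwell :: "real^'n::finite \<Rightarrow> (real^'n \<Rightarrow> real^'n) \<Rightarrow> bool" where
  "respects_blackwell \<mu> \<phi> \<longleftrightarrow>
     (\<forall>A u astar \<pi> \<pi>'. decision_problem A u astar \<and> is_experiment \<pi> \<and> is_experiment \<pi>' \<and>
        blackwell_geq \<mu> \<pi> \<pi>' \<longrightarrow>
        measure_pmf.expectation (bayes_dist \<mu> \<pi>') (welfare \<phi> u astar)
          \<le> measure_pmf.expectation (bayes_dist \<mu> \<pi>) (welfare \<phi> u astar))"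

end

theory Submission imports Defs begin

definition tri :: "real \<Rightarrow> real \<Rightarrow> real \<Rightarrow> nat pmf" where
  "tri a b c = pmf_of_list [(0,a),(1,b),(2,c)]"

lemma tri_wf: "a\<ge>0 \<Longrightarrow> b\<ge>0 \<Longrightarrow> c\<ge>0 \<Longrightarrow> a+b+c=1 \<Longrightarrow> pmf_of_list_wf [(0::nat,a),(1,b),(2,c)]"
  by (rule pmf_of_list_wfI) (auto simp: add.assoc[symmetric])

lemma pmf_tri:
  assumes "a\<ge>0" "b\<ge>0" "c\<ge>0" "a+b+c=1"
  shows "pmf (tri a b c) s = (if s=0 then a else if s=1 then b else if s=2 then c else 0)"
  unfolding tri_def using tri_wf[OF assms] by (simp add: pmf_pmf_of_list)

lemma set_tri:
  assumes "a\<ge>0" "b\<ge>0" "c\<ge>0" "a+b+c=1"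
  shows "set_pmf (tri a b c) \<subseteq> {0,1,2}"
  unfolding tri_def using set_pmf_of_list[OF tri_wf[OF assms]] by auto

lemma integral_tri:
  fixes f :: "nat \<Rightarrow> 'b::{banach, second_countable_topology}"
  assumes "a\<ge>0" "b\<ge>0" "c\<ge>0" "a+b+c=1"
  shows "measure_pmf.expectation (tri a b c) f = a *\<^sub>R f 0 + b *\<^sub>R f 1 + c *\<^sub>R f 2"
proof -
  have "measure_pmf.expectation (tri a b c) f = (\<Sum>s\<in>{0,1,2}. pmf (tri a b c) s *\<^sub>R f s)"
    by (rule integral_measure_pmf) (use set_tri[OF assms] in auto)
  also have "\<dots> = a *\<^sub>R f 0 + b *\<^sub>R f 1 + c *\<^sub>R f 2"
    by (simp add: pmf_tri[OF assms])
  finally show ?thesis .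
qed

lemma integral_tri_real:
  fixes f :: "nat \<Rightarrow> real"
  assumes "a\<ge>0" "b\<ge>0" "c\<ge>0" "a+b+c=1"
  shows "measure_pmf.expectation (tri a b c) f = a * f 0 + b * f 1 + c * f 2"
  using integral_tri[OF assms, of f] by simp

lemma pmf_prior:
  assumes "\<mu> \<in> beliefs"
  shows "pmf (prior_pmf \<mu>) \<theta> = \<mu> $ \<theta>"
  unfolding prior_pmf_def
proof (rule pmf_embed_pmf)
  show "\<And>x. 0 \<le> \<mu> $ x" using assms by (auto simp: beliefs_def)
  have "(\<integral>\<^sup>+ x. ennreal (\<mu> $ x) \<partial>count_space UNIV) = (\<Sum>x\<in>UNIV. ennreal (\<mu> $ x))"
    by (rule nn_integral_count_space_finite) simp
  also have "\<dots> = ennreal (\<Sum>x\<in>UNIV. \<mu> $ x)"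
    using assms by (intro sum_ennreal) (auto simp: beliefs_def)
  also have "\<dots> = 1" using assms by (simp add: beliefs_def)
  finally show "(\<integral>\<^sup>+ x. ennreal (\<mu> $ x) \<partial>count_space UNIV) = 1" .
qed

definition expt :: "real^'n::finite \<Rightarrow> real \<Rightarrow> real \<Rightarrow> real \<Rightarrow> real^'n \<Rightarrow> real^'n \<Rightarrow> real^'n \<Rightarrow> 'n \<Rightarrow> nat pmf" where
  "expt \<mu> w0 w1 w2 y0 y1 y2 \<theta> = tri (w0*y0$\<theta>/\<mu>$\<theta>) (w1*y1$\<theta>/\<mu>$\<theta>) (w2*y2$\<theta>/\<mu>$\<theta>)"

definition sel :: "'a \<Rightarrow> 'a \<Rightarrow> 'a \<Rightarrow> nat \<Rightarrow> 'a" where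
  "sel y0 y1 y2 s = (if s = 0 then y0 else if s = 1 then y1 else y2)"

lemma expt_facts:
  fixes \<mu> :: "real^'n::finite"
  assumes mu: "\<forall>\<theta>. \<mu>$\<theta> > 0" "\<mu> \<in> beliefs"
    and w: "w0\<ge>0" "w1\<ge>0" "w2\<ge>0" "w0+w1+w2=1"
    and y: "y0 \<in> beliefs" "y1\<in>beliefs" "y2 \<in> beliefs"
    and comb: "w0 *\<^sub>R y0 + w1 *\<^sub>R y1 + w2 *\<^sub>R y2 = \<mu>"
  shows "is_experiment (expt \<mu> w0 w1 w2 y0 y1 y2)"
    and "bayes_dist \<mu> (expt \<mu> w0 w1 w2 y0 y1 y2) = map_pmf (sel y0 y1 y2) (tri w0 w1 w2)"
proof -
  have c: "w0*y0$\<theta> + w1*y1$\<theta> + w2*y2$\<theta> = \<mu>$\<theta>" for \<theta>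
    using arg_cong[OF comb, of "\<lambda>v. v$\<theta>"] by simp
  have yn: "0 \<le> y0$\<theta>" "0 \<le> y1$\<theta>" "0 \<le> y2$\<theta>" for \<theta> using y by (auto simp: beliefs_def)
  have ys: "(\<Sum>\<theta>\<in>UNIV. y0$\<theta>) = 1" "(\<Sum>\<theta>\<in>UNIV. y1$\<theta>) = 1" "(\<Sum>\<theta>\<in>UNIV. y2$\<theta>) = 1"
    using y by (auto simp: beliefs_def)
  have wn: "0 \<le> w0*y0$\<theta>/\<mu>$\<theta>" "0 \<le> w1*y1$\<theta>/\<mu>$\<theta>" "0 \<le> w2*y2$\<theta>/\<mu>$\<theta>" for \<theta>
    using yn[of \<theta>] w mu(1) by (auto intro!: divide_nonneg_pos)
  have ws: "w0*y0$\<theta>/\<mu>$\<theta> + w1*y1$\<theta>/\<mu>$\<theta> + w2*y2$\<theta>/\<mu>$\<theta> = 1" for \<theta>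
  proof -
    have "w0*y0$\<theta>/\<mu>$\<theta> + w1*y1$\<theta>/\<mu>$\<theta> + w2*y2$\<theta>/\<mu>$\<theta> = (w0*y0$\<theta> + w1*y1$\<theta> + w2*y2$\<theta>)/\<mu>$\<theta>"
      by (simp add: add_divide_distrib)
    also have "\<dots> = 1" using c[of \<theta>] mu(1) by (simp add: less_imp_neq[symmetric])
    finally show ?thesis .
  qed
  have tf: "0 \<le> w0*y0$\<theta>/\<mu>$\<theta>" "0 \<le> w1*y1$\<theta>/\<mu>$\<theta>" "0 \<le> w2*y2$\<theta>/\<mu>$\<theta>"
    "w0*y0$\<theta>/\<mu>$\<theta> + w1*y1$\<theta>/\<mu>$\<theta> + w2*y2$\<theta>/\<mu>$\<theta> = 1" for \<theta>
    using wn ws by auto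
  show "is_experiment (expt \<mu> w0 w1 w2 y0 y1 y2)"
    unfolding is_experiment_def expt_def
    using set_tri[OF tf] by (auto intro: finite_subset)
  have sig: "signal_pmf \<mu> (expt \<mu> w0 w1 w2 y0 y1 y2) = tri w0 w1 w2"
  proof (rule pmf_eqI)
    fix i
    have "pmf (signal_pmf \<mu> (expt \<mu> w0 w1 w2 y0 y1 y2)) i
        = (\<Sum>\<theta>\<in>UNIV. pmf (expt \<mu> w0 w1 w2 y0 y1 y2 \<theta>) i * pmf (prior_pmf \<mu>) \<theta>)"
      unfolding signal_pmf_def pmf_bind by (rule integral_measure_pmf_real) auto
    also have "\<dots> = (\<Sum>\<theta>\<in>UNIV. (if i=0 then w0*y0$\<theta> else if i=1 then w1*y1$\<theta> else if i=2 then w2*y2$\<theta> else 0))"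
      using mu(1) by (intro sum.cong refl) (auto simp: expt_def pmf_tri[OF tf] pmf_prior[OF mu(2)] less_imp_neq[symmetric])
    also have "\<dots> = pmf (tri w0 w1 w2) i"
      using ys by (auto simp: pmf_tri[OF w] sum_distrib_left[symmetric])
    finally show "pmf (signal_pmf \<mu> (expt \<mu> w0 w1 w2 y0 y1 y2)) i = pmf (tri w0 w1 w2) i" .
  qed
  show "bayes_dist \<mu> (expt \<mu> w0 w1 w2 y0 y1 y2) = map_pmf (sel y0 y1 y2) (tri w0 w1 w2)"
    unfolding bayes_dist_def sig
  proof (rule map_pmf_cong[OF refl])
    fix s assume s: "s \<in> set_pmf (tri w0 w1 w2)"
    hence ps: "pmf (tri w0 w1 w2) s > 0" by (simp add: pmf_positive)
    show "posterior \<mu> (expt \<mu> w0 w1 w2 y0 y1 y2) s = sel y0 y1 y2 s"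
      unfolding posterior_def sig vec_eq_iff
    proof
      fix \<theta>
      show "(\<chi> \<theta>. \<mu> $ \<theta> * pmf (expt \<mu> w0 w1 w2 y0 y1 y2 \<theta>) s / pmf (tri w0 w1 w2) s) $ \<theta> = sel y0 y1 y2 s $ \<theta>"
        using ps mu(1)[rule_format, of \<theta>] set_tri[OF w] s
        by (auto simp: expt_def pmf_tri[OF tf] pmf_tri[OF w] sel_def less_imp_neq[symmetric])
    qed
  qed
qed

lemma beliefs_comb:
  assumes "p \<in> beliefs" "q \<in> beliefs" "0 \<le> l" "l \<le> 1"
  shows "l *\<^sub>R p + (1-l) *\<^sub>R q \<in> beliefs"
  using assms by (auto simp: beliefs_def sum.distrib sum_distrib_left[symmetric])

lemma expect_return: "measure_pmf.expectation (return_pmf (y::'a::{banach, second_countable_topology})) (\<lambda>x. x) = y"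
  by (subst integral_measure_pmf[of "{y}"]) auto

lemma convex_welfare:
  fixes \<mu> :: "real^'n::finite"
  assumes mu: "\<forall>\<theta>. \<mu>$\<theta> > 0" "\<mu> \<in> beliefs"
    and rb: "respects_blackwell \<mu> \<phi>" and dp: "decision_problem A u astar"
    and p: "p \<in> beliefs" and q: "q \<in> beliefs" and l: "0 < l" "l < 1"
  shows "welfare \<phi> u astar (l *\<^sub>R p + (1-l) *\<^sub>R q)
           \<le> l * welfare \<phi> u astar p + (1-l) * welfare \<phi> u astar q"
proof -
  define m where "m = l *\<^sub>R p + (1-l) *\<^sub>R q"
  have m: "m \<in> beliefs" unfolding m_def using p q l by (intro beliefs_comb) auto
  obtain t z where t: "0 < t" "t \<le> 1" and z: "z \<in> beliefs" and tz: "t *\<^sub>R m + (1-t) *\<^sub>R z = \<mu>"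
     and zm: "t < 1 \<Longrightarrow> z \<noteq> m"
  proof (cases "m = \<mu>")
    case True
    show ?thesis by (rule that[of 1 \<mu>]) (use True mu in auto)
  next
    case False
    define d where "d = Min (range (\<lambda>\<theta>. \<mu>$\<theta>))"
    have dpos: "d > 0" unfolding d_def using mu(1) by (subst Min_gr_iff) auto
    have dle: "d \<le> \<mu>$\<theta>" for \<theta> unfolding d_def by (rule Min_le) auto
    obtain \<theta>0 :: 'n where True by simp
    have "\<mu>$\<theta>0 \<le> 1"
    proof -
      have "\<mu>$\<theta>0 \<le> (\<Sum>\<theta>\<in>UNIV. \<mu>$\<theta>)"
        using mu(2) by (intro member_le_sum) (auto simp: beliefs_def)
      thus ?thesis using mu(2) by (simp add: beliefs_def)
    qed
    hence d1: "d \<le> 1" using dle[of \<theta>0] by simp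
    define t where "t = d/2"
    have t0: "0 < t" "t < 1" using dpos d1 by (auto simp: t_def)
    define z where "z = (1/(1-t)) *\<^sub>R (\<mu> - t *\<^sub>R m)"
    have mle: "m$\<theta> \<le> 1" for \<theta>
    proof -
      have "m$\<theta> \<le> (\<Sum>\<theta>\<in>UNIV. m$\<theta>)"
        using m by (intro member_le_sum) (auto simp: beliefs_def)
      thus ?thesis using m by (simp add: beliefs_def)
    qed
    have m0: "0 \<le> m$\<theta>" for \<theta> using m by (auto simp: beliefs_def)
    have zb: "z \<in> beliefs"
      unfolding beliefs_def
    proof (intro CollectI conjI allI)
      fix \<theta>
      have "t * m$\<theta> \<le> \<mu>$\<theta>"
      proof -
        have "t * m$\<theta> \<le> t" using mle[of \<theta>] t0 by (simp add: mult_left_le)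
        moreover have "t \<le> d" using dpos by (simp add: t_def)
        ultimately show ?thesis using dle[of \<theta>] by linarith
      qed
      thus "0 \<le> z$\<theta>" using t0 by (simp add: z_def)
    next
      have "(\<Sum>\<theta>\<in>UNIV. z$\<theta>) = ((\<Sum>\<theta>\<in>UNIV. \<mu>$\<theta>) - t * (\<Sum>\<theta>\<in>UNIV. m$\<theta>)) / (1-t)"
        by (simp add: z_def sum_divide_distrib[symmetric] sum_subtractf sum_distrib_left[symmetric])
      also have "\<dots> = 1" using mu(2) m t0 by (simp add: beliefs_def)
      finally show "(\<Sum>\<theta>\<in>UNIV. z$\<theta>) = 1" .
    qed
    have "(1-t) *\<^sub>R z = \<mu> - t *\<^sub>R m"
      using t0 by (simp add: z_def)
    hence tz: "t *\<^sub>R m + (1-t) *\<^sub>R z = \<mu>" by simp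
    have "z \<noteq> m"
    proof
      assume "z = m"
      with tz have "\<mu> = m" by (simp add: scaleR_left_distrib[symmetric])
      with False show False by simp
    qed
    show ?thesis by (rule that[of t z]) (use t0 zb tz \<open>z \<noteq> m\<close> in auto)
  qed
  have w1: "0 \<le> t*l" "0 \<le> t*(1-l)" "0 \<le> 1-t" "t*l + t*(1-l) + (1-t) = 1"
    using t l by (auto simp: algebra_simps)
  have w2: "0 \<le> t" "0 \<le> (0::real)" "0 \<le> 1-t" "t + 0 + (1-t) = 1"
    using t by auto
  have w3: "0 \<le> l" "0 \<le> 1-l" "0 \<le> (0::real)" "l + (1-l) + 0 = 1" using l by auto
  have c1: "(t*l) *\<^sub>R p + (t*(1-l)) *\<^sub>R q + (1-t) *\<^sub>R z = \<mu>"
    using tz unfolding m_def by (simp add: scaleR_add_right)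
  have c2: "t *\<^sub>R m + 0 *\<^sub>R m + (1-t) *\<^sub>R z = \<mu>" using tz by simp
  define \<pi> where "\<pi> = expt \<mu> (t*l) (t*(1-l)) (1-t) p q z"
  define \<pi>' where "\<pi>' = expt \<mu> t 0 (1-t) m m z"
  note e1 = expt_facts[OF mu w1 p q z c1, folded \<pi>_def]
  note e2 = expt_facts[OF mu w2 m m z c2, folded \<pi>'_def]
  define K where "K y = (if y = m then map_pmf (sel p q z) (tri l (1-l) 0) else return_pmf y)" for y
  define H where "H s = (if s = 0 then tri l (1-l) 0 else return_pmf s)" for s
  have TH: "tri (t*l) (t*(1-l)) (1-t) = bind_pmf (tri t 0 (1-t)) H"
  proof (rule pmf_eqI)
    fix i
    have "pmf (bind_pmf (tri t 0 (1-t)) H) i = t * pmf (tri l (1-l) 0) i + (1-t) * pmf (return_pmf 2) i"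
      unfolding pmf_bind by (subst integral_tri_real[OF w2]) (simp add: H_def)
    thus "pmf (tri (t*l) (t*(1-l)) (1-t)) i = pmf (bind_pmf (tri t 0 (1-t)) H) i"
      by (simp add: pmf_tri[OF w1] pmf_tri[OF w3] pmf_return)
  qed
  have mpc: "mpc (bayes_dist \<mu> \<pi>') (bayes_dist \<mu> \<pi>)"
    unfolding mpc_def
  proof (intro exI conjI ballI)
    show "bayes_dist \<mu> \<pi> = bind_pmf (bayes_dist \<mu> \<pi>') K"
      unfolding e1(2) e2(2) bind_map_pmf TH map_bind_pmf
    proof (rule bind_pmf_cong[OF refl])
      fix s assume s: "s \<in> set_pmf (tri t 0 (1-t))"
      have ps: "pmf (tri t 0 (1-t)) s > 0" using s by (simp add: pmf_positive)
      show "map_pmf (sel p q z) (H s) = K (sel m m z s)"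
      proof -
        have s02: "s = 0 \<or> (s = 2 \<and> t < 1)"
          using ps by (auto simp: pmf_tri[OF w2] split: if_splits)
        thus ?thesis
        proof
          assume "s = 0" thus ?thesis by (simp add: H_def K_def sel_def)
        next
          assume "s = 2 \<and> t < 1"
          thus ?thesis using zm by (simp add: H_def K_def sel_def)
        qed
      qed
    qed
  next
    fix y assume y: "y \<in> set_pmf (bayes_dist \<mu> \<pi>')"
    then obtain s where s: "s \<in> set_pmf (tri t 0 (1-t))" and ys: "y = sel m m z s"
      unfolding e2(2) by auto
    have ps: "pmf (tri t 0 (1-t)) s > 0" using s by (simp add: pmf_positive)
    show "measure_pmf.expectation (K y) (\<lambda>x. x) = y"
    proof (cases "y = m")
      case True
      have "measure_pmf.expectation (K y) (\<lambda>x. x) = l *\<^sub>R p + (1-l) *\<^sub>R q"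
        using True by (simp add: K_def integral_tri[OF w3] sel_def)
      thus ?thesis using True m_def by simp
    next
      case False
      thus ?thesis by (simp add: K_def expect_return)
    qed
  qed
  have "measure_pmf.expectation (bayes_dist \<mu> \<pi>') (welfare \<phi> u astar)
          \<le> measure_pmf.expectation (bayes_dist \<mu> \<pi>) (welfare \<phi> u astar)"
    using rb dp e1(1) e2(1) mpc unfolding respects_blackwell_def blackwell_geq_def by blast
  hence ineq: "t * welfare \<phi> u astar m + (1-t) * welfare \<phi> u astar z
       \<le> t*l * welfare \<phi> u astar p + t*(1-l) * welfare \<phi> u astar q + (1-t) * welfare \<phi> u astar z"
    unfolding e1(2) e2(2) integral_map_pmf integral_tri_real[OF w1] integral_tri_real[OF w2]
    by (simp add: sel_def)
  have "t * welfare \<phi> u astar m \<le> t * (l * welfare \<phi> u astar p + (1-l) * welfare \<phi> u astar q)"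
  proof -
    have "t * (l * welfare \<phi> u astar p + (1-l) * welfare \<phi> u astar q)
        = t*l * welfare \<phi> u astar p + t*(1-l) * welfare \<phi> u astar q" by (simp add: ring_distribs)
    thus ?thesis using ineq by linarith
  qed
  thus ?thesis using t(1) unfolding m_def by simp
qed

lemma vec_sep:
  fixes a b :: "'a::real_inner"
  assumes a: "a \<noteq> 0" and nb: "\<not> (\<exists>t\<ge>1. b = t *\<^sub>R a)"
  shows "\<exists>g. inner g a > 0 \<and> inner g b < inner g a"
proof (rule ccontr)
  assume "\<not> ?thesis"
  hence H: "\<And>g. inner g a > 0 \<Longrightarrow> inner g a \<le> inner g b" by (meson not_le)
  define r where "r = b - a"
  define k where "k = inner r a / inner a a"
  define h where "h = r - k *\<^sub>R a"
  have aa: "inner a a > 0" using a by simp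
  have ha: "inner h a = 0" unfolding h_def k_def using aa by (simp add: inner_diff_left)
  have hr: "inner h r = inner h h"
  proof -
    have "r = h + k *\<^sub>R a" by (simp add: h_def)
    hence "inner h r = inner h h + k * inner h a" by (simp add: inner_add_right)
    thus ?thesis using ha by simp
  qed
  have key: "0 \<le> inner a r + s * inner h h" for s
  proof -
    have ga: "inner (a + s *\<^sub>R h) a = inner a a"
      using ha by (simp add: inner_add_left)
    hence "inner (a + s *\<^sub>R h) a \<le> inner (a + s *\<^sub>R h) b" using H[of "a + s *\<^sub>R h"] aa by linarith
    hence "0 \<le> inner (a + s *\<^sub>R h) r" by (simp add: r_def inner_diff_right)
    moreover have "inner (a + s *\<^sub>R h) r = inner a r + s * inner h r" by (simp add: inner_add_left)
    ultimately show ?thesis using hr by simp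
  qed
  have h0: "h = 0"
  proof (rule ccontr)
    assume "h \<noteq> 0"
    hence hh: "inner h h > 0" by simp
    have "0 \<le> inner a r + (-(inner a r + 1)/inner h h) * inner h h" by (rule key)
    thus False using hh by simp
  qed
  have "0 \<le> inner a r" using key[of 0] by simp
  hence k0: "0 \<le> k" unfolding k_def using aa by (simp add: inner_commute)
  have "b = (1 + k) *\<^sub>R a" using h0 unfolding h_def r_def by (simp add: algebra_simps)
  moreover have "1 + k \<ge> 1" using k0 by simp
  ultimately show False using nb by blast
qed

lemma rel_interior_pos:
  fixes \<mu> :: "real^'n::finite"
  assumes "\<mu> \<in> rel_interior beliefs"
  shows "\<mu> \<in> beliefs" "\<forall>\<theta>. \<mu>$\<theta> > 0"
proof -
  show mb: "\<mu> \<in> beliefs" using assms rel_interior_subset by blast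
  obtain e where e: "e > 0" "ball \<mu> e \<inter> affine hull beliefs \<subseteq> beliefs"
    using assms by (auto simp: mem_rel_interior_ball)
  show "\<forall>\<theta>. \<mu>$\<theta> > 0"
  proof (rule ccontr)
    assume "\<not> (\<forall>\<theta>. \<mu>$\<theta> > 0)"
    then obtain i where i: "\<mu>$i \<le> 0" by (auto simp: not_less)
    hence i0: "\<mu>$i = 0" using mb by (auto simp: beliefs_def intro: antisym)
    define ei :: "real^'n" where "ei = axis i 1"
    have eb: "ei \<in> beliefs" by (auto simp: beliefs_def ei_def axis_def)
    define eps where "eps = e / (2 * (norm (\<mu> - ei) + 1))"
    have eps: "eps > 0" using e unfolding eps_def by (intro divide_pos_pos) (auto intro: add_nonneg_pos)
    define y where "y = (1 + eps) *\<^sub>R \<mu> + (- eps) *\<^sub>R ei"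
    have ya: "y \<in> affine hull beliefs"
      unfolding y_def
      by (rule mem_affine[OF affine_affine_hull]) (use mb eb hull_inc in auto)
    have "dist \<mu> y = norm (eps *\<^sub>R (\<mu> - ei))"
      by (simp add: y_def dist_norm algebra_simps norm_minus_commute)
    also have "\<dots> = eps * norm (\<mu> - ei)" using eps by simp
    also have "\<dots> < e"
    proof -
      have "eps * norm (\<mu> - ei) = e * (norm (\<mu> - ei) / (2 * (norm (\<mu> - ei) + 1)))"
        by (simp add: eps_def)
      also have "\<dots> < e * 1"
      proof (intro mult_strict_left_mono)
        have np: "0 \<le> norm (\<mu> - ei)" by simp
        show "norm (\<mu> - ei) / (2 * (norm (\<mu> - ei) + 1)) < 1"
        proof -
          have d: "0 < 2 * (norm (\<mu> - ei) + 1)" by (smt (verit) norm_ge_zero)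
          show ?thesis unfolding pos_divide_less_eq[OF d] by (smt (verit) norm_ge_zero)
        qed
      qed (use e in auto)
      finally show ?thesis by simp
    qed
    finally have "y \<in> ball \<mu> e" by simp
    with ya e have "y \<in> beliefs" by blast
    moreover have "y$i = - eps" by (simp add: y_def i0 ei_def)
    ultimately show False using eps by (auto simp: beliefs_def dest: spec[of _ i])
  qed
qed

definition Dv :: "real^'n::finite \<Rightarrow> real \<Rightarrow> real^'n \<Rightarrow> real" where
  "Dv g k y = (\<Sum>\<theta>\<in>UNIV. y$\<theta> * (g$\<theta> - k))"

definition ut :: "real^'n::finite \<Rightarrow> real \<Rightarrow> real^'n \<Rightarrow> 'n \<Rightarrow> real" where
  "ut g k a \<theta> = a$\<theta> * (g$\<theta> - k)"

definition ast :: "real^'n::finite \<Rightarrow> real \<Rightarrow> real^'n \<Rightarrow> real^'n" where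
  "ast g k y = (if Dv g k y > 0 then 1 else 0)"

lemma eu0: "exp_util (ut g k) y 0 = 0" by (simp add: exp_util_def ut_def)
lemma eu1: "exp_util (ut g k) y 1 = Dv g k y" by (simp add: exp_util_def ut_def Dv_def)

lemma dp_two:
  fixes g :: "real^'n::finite"
  shows "decision_problem {0, 1} (ut g k) (ast g k)"
  unfolding decision_problem_def
proof (intro conjI allI ballI)
  show "compact {0::real^'n, 1}" by (rule finite_imp_compact) simp
  show "{0::real^'n, 1} \<noteq> {}" by simp
  fix \<theta> show "continuous_on {0, 1} (\<lambda>a. ut g k a \<theta>)"
    unfolding ut_def by (intro continuous_intros)
next
  fix y :: "real^'n" assume "y \<in> beliefs"
  show "ast g k y \<in> {0, 1}" by (simp add: ast_def)
  fix a assume "a \<in> {0::real^'n, 1}"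
  thus "exp_util (ut g k) y a \<le> exp_util (ut g k) y (ast g k y)"
    by (auto simp: ast_def eu0 eu1)
qed

lemma welfare_two: "welfare \<phi> (ut g k) (ast g k) x = (if Dv g k (\<phi> x) > 0 then Dv g k x else 0)"
  by (simp add: welfare_def ast_def eu0 eu1)

lemma lemmaA:
  fixes \<mu> :: "real^'n::finite"
  assumes mu: "\<forall>\<theta>. \<mu>$\<theta> > 0" "\<mu> \<in> beliefs"
    and rb: "respects_blackwell \<mu> \<phi>" and cont: "continuous_on beliefs \<phi>"
    and x: "x \<in> beliefs" and w: "w \<in> beliefs"
    and d1: "Dv g k x < 0" and d2: "Dv g k (\<phi> x) > 0" and d3: "Dv g k (\<phi> w) < 0"
  shows False
proof -
  have hc: "continuous_on beliefs (\<lambda>y. Dv g k (\<phi> y))"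
    unfolding Dv_def by (intro continuous_intros cont)
  obtain del where del: "del > 0" "\<And>y. y \<in> beliefs \<Longrightarrow> dist y w < del \<Longrightarrow> dist (Dv g k (\<phi> y)) (Dv g k (\<phi> w)) < - Dv g k (\<phi> w)"
    using hc w d3 unfolding continuous_on_iff by (metis neg_0_less_iff_less)
  define l where "l = min (1/2) (del / (2 * (norm (x - w) + 1)))"
  have dd: "0 < 2 * (norm (x - w) + 1)" by (smt (verit) norm_ge_zero)
  have l0: "0 < l" "l < 1" using del dd by (auto simp: l_def)
  define m where "m = l *\<^sub>R x + (1-l) *\<^sub>R w"
  have mb: "m \<in> beliefs" unfolding m_def using x w l0 by (intro beliefs_comb) auto
  have "dist m w = norm (l *\<^sub>R (x - w))"
    by (simp add: m_def dist_norm algebra_simps)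
  also have "\<dots> = l * norm (x - w)" using l0 by simp
  also have "\<dots> \<le> (del / (2 * (norm (x - w) + 1))) * norm (x - w)"
    by (intro mult_right_mono) (auto simp: l_def)
  also have "\<dots> < del"
  proof -
    have "(del / (2 * (norm (x - w) + 1))) * norm (x - w) = del * (norm (x - w) / (2 * (norm (x - w) + 1)))"
      by simp
    also have "\<dots> < del * 1"
    proof (intro mult_strict_left_mono)
      show "norm (x - w) / (2 * (norm (x - w) + 1)) < 1"
        unfolding pos_divide_less_eq[OF dd] by (smt (verit) norm_ge_zero)
    qed (use del in auto)
    finally show ?thesis by simp
  qed
  finally have "Dv g k (\<phi> m) < 0" using del(2)[OF mb] by (auto simp: dist_real_def)
  hence wm: "welfare \<phi> (ut g k) (ast g k) m = 0" by (simp add: welfare_two)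
  have ww: "welfare \<phi> (ut g k) (ast g k) w = 0" using d3 by (simp add: welfare_two)
  have wx: "welfare \<phi> (ut g k) (ast g k) x = Dv g k x" using d2 by (simp add: welfare_two)
  have "welfare \<phi> (ut g k) (ast g k) m \<le> l * welfare \<phi> (ut g k) (ast g k) x + (1-l) * welfare \<phi> (ut g k) (ast g k) w"
    unfolding m_def by (rule convex_welfare[OF mu rb dp_two x w l0])
  hence "0 \<le> l * Dv g k x" using wm ww wx by simp
  moreover have "l * Dv g k x < 0" using l0 d1 by (simp add: mult_pos_neg)
  ultimately show False by simp
qed

lemma Dv_inner:
  assumes "y \<in> beliefs"
  shows "Dv g k y = inner g y - k"
proof -
  have "Dv g k y = (\<Sum>\<theta>\<in>UNIV. g$\<theta> * y$\<theta>) - k * (\<Sum>\<theta>\<in>UNIV. y$\<theta>)"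
    by (simp add: Dv_def algebra_simps sum_subtractf sum_distrib_left)
  thus ?thesis using assms by (simp add: beliefs_def inner_vec_def)
qed

lemma lemmaB:
  fixes \<mu> :: "real^'n::finite"
  assumes mu: "\<forall>\<theta>. \<mu>$\<theta> > 0" "\<mu> \<in> beliefs"
    and rb: "respects_blackwell \<mu> \<phi>" and cont: "continuous_on beliefs \<phi>"
    and maps: "\<forall>x\<in>beliefs. \<phi> x \<in> beliefs"
    and x: "x \<in> beliefs" and w: "w \<in> beliefs" and nx: "\<phi> x \<noteq> x"
  shows "\<exists>t\<ge>1. \<phi> w - x = t *\<^sub>R (\<phi> x - x)"
proof (rule ccontr)
  assume nb: "\<not> ?thesis"
  have a0: "\<phi> x - x \<noteq> 0" using nx by simp
  obtain g where g: "inner g (\<phi> x - x) > 0" "inner g (\<phi> w - x) < inner g (\<phi> x - x)"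
    using vec_sep[OF a0 nb] by blast
  define k where "k = (max (inner g x) (inner g x + inner g (\<phi> w - x)) + (inner g x + inner g (\<phi> x - x))) / 2"
  have "Dv g k x < 0" using g x unfolding Dv_inner[OF x] k_def by (simp add: inner_diff_right)
  moreover have "Dv g k (\<phi> x) > 0" using g x maps unfolding Dv_inner[OF maps[rule_format, OF x]] k_def
    by (simp add: inner_diff_right)
  moreover have "Dv g k (\<phi> w) < 0" using g x maps unfolding Dv_inner[OF maps[rule_format, OF w]] k_def
    by (simp add: inner_diff_right)
  ultimately show False using lemmaA[OF mu rb cont x w] by blast
qed

lemma line_aux_real:
  fixes r y c p x s s' a :: real
  assumes "r \<noteq> 1" "c - y = r*(p - y)" "p - x = s*a" "c - x = s'*a"
  shows "y = x + ((r * s - s')/(r-1))*a"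
proof -
  have r1: "r - 1 \<noteq> 0" using assms(1) by simp
  have "(r - 1) * y = (r - 1) * x + (r * s - s')*a"
    using assms(2-4) by (simp add: algebra_simps)
  thus ?thesis using r1 by (simp add: field_simps)
qed

lemma line_aux:
  fixes y c p x a :: "real^'n::finite"
  assumes "r \<noteq> 1" "c - y = r *\<^sub>R (p - y)" "p - x = s *\<^sub>R a" "c - x = s' *\<^sub>R a"
  shows "y = x + ((r * s - s')/(r-1)) *\<^sub>R a"
  unfolding vec_eq_iff
proof
  fix i
  have "c$i - y$i = r*(p$i - y$i)" "p$i - x$i = s*a$i" "c$i - x$i = s'*a$i"
    using assms(2-4) by (auto simp: vec_eq_iff)
  from line_aux_real[OF assms(1) this] show "y $ i = (x + ((r * s - s')/(r-1)) *\<^sub>R a) $ i" by simp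
qed

lemma offline:
  fixes x0 a :: "real^'n::finite"
  assumes "CARD('n) \<ge> 3"
  shows "\<exists>y\<in>beliefs. \<forall>s. y \<noteq> x0 + s *\<^sub>R a"
proof (rule ccontr)
  assume "\<not> ?thesis"
  hence L: "\<And>y. y \<in> beliefs \<Longrightarrow> \<exists>s. y = x0 + s *\<^sub>R a" by blast
  obtain T :: "'n set" where T: "card T = 3" using obtain_subset_with_card_n[OF assms] by metis
  hence "\<exists>i j k :: 'n. i \<noteq> j \<and> j \<noteq> k \<and> i \<noteq> k"
    unfolding card_3_iff by blast
  then obtain i j k :: 'n where ijk: "i \<noteq> j" "j \<noteq> k" "i \<noteq> k" by blast
  have ax: "axis m 1 \<in> beliefs" for m :: 'n by (auto simp: beliefs_def axis_def)
  obtain si where si: "axis i 1 = x0 + si *\<^sub>R a" using L[OF ax] by blast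
  obtain sj where sj: "axis j 1 = x0 + sj *\<^sub>R a" using L[OF ax] by blast
  obtain sk where sk: "axis k 1 = x0 + sk *\<^sub>R a" using L[OF ax] by blast
  have ci: "0 = x0$k + si * a$k" "0 = x0$j + si * a$j"
    using arg_cong[OF si, of "\<lambda>v. v$k"] arg_cong[OF si, of "\<lambda>v. v$j"] ijk by (auto simp: axis_def)
  have cj: "0 = x0$k + sj * a$k" "1 = x0$j + sj * a$j"
    using arg_cong[OF sj, of "\<lambda>v. v$k"] arg_cong[OF sj, of "\<lambda>v. v$j"] ijk by (auto simp: axis_def)
  have ck: "1 = x0$k + sk * a$k"
    using arg_cong[OF sk, of "\<lambda>v. v$k"] by (auto simp: axis_def)
  have "a$k \<noteq> 0" using ci(1) ck by auto
  moreover have "si * a$k = sj * a$k" using ci(1) cj(1) by linarith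
  ultimately have "si = sj" by simp
  thus False using ci(2) cj(2) by simp
qed

lemma partA:
  fixes \<mu> :: "real^'n::finite" and \<phi> :: "real^'n \<Rightarrow> real^'n"
  assumes n3: "CARD('n) \<ge> 3"
    and maps: "\<forall>x\<in>beliefs. \<phi> x \<in> beliefs"
    and B: "\<And>x w. x \<in> beliefs \<Longrightarrow> w \<in> beliefs \<Longrightarrow> \<phi> x \<noteq> x \<Longrightarrow> \<exists>t\<ge>1. \<phi> w - x = t *\<^sub>R (\<phi> x - x)"
  shows "(\<exists>xs\<in>beliefs. \<forall>x\<in>beliefs. \<phi> x = xs) \<or> (\<forall>x\<in>beliefs. \<phi> x = x)"
proof (cases "\<forall>x\<in>beliefs. \<phi> x = x")
  case True thus ?thesis by blast
next
  case False
  then obtain x0 where x0: "x0 \<in> beliefs" "\<phi> x0 \<noteq> x0" by blast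
  define c where "c = \<phi> x0"
  define a where "a = c - x0"
  have ca: "c - x0 = 1 *\<^sub>R a" by (simp add: a_def)
  obtain y where y: "y \<in> beliefs" and yL: "\<And>s. y \<noteq> x0 + s *\<^sub>R a" using offline[OF n3] by blast
  have "\<forall>w\<in>beliefs. \<phi> w = c"
  proof
    fix w :: "real^'n" assume w: "w \<in> beliefs"
    show "\<phi> w = c"
    proof (rule ccontr)
      assume vc: "\<phi> w \<noteq> c"
      obtain t where t: "\<phi> w - x0 = t *\<^sub>R a" using B[OF x0(1) w x0(2)] unfolding a_def c_def by blast
      show False
      proof (cases "\<phi> y = c")
        case False
        obtain s where s: "\<phi> y - x0 = s *\<^sub>R a" using B[OF x0(1) y x0(2)] unfolding a_def c_def by blast
        have py: "\<phi> y \<noteq> y"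
        proof
          assume "\<phi> y = y"
          hence "y = x0 + s *\<^sub>R a" using s by (simp add: algebra_simps)
          thus False using yL by blast
        qed
        obtain r where r: "r \<ge> 1" "c - y = r *\<^sub>R (\<phi> y - y)" using B[OF y x0(1) py] unfolding c_def by blast
        have "r \<noteq> 1" using r False by auto
        from line_aux[OF this r(2) s ca] yL show False by blast
      next
        case True
        have cy: "\<phi> y \<noteq> y"
        proof
          assume "\<phi> y = y"
          hence "y = x0 + 1 *\<^sub>R a" using True by (simp add: a_def)
          thus False using yL by blast
        qed
        obtain r where r: "r \<ge> 1" "\<phi> w - y = r *\<^sub>R (\<phi> y - y)" using B[OF y w cy] by blast
        have r2: "\<phi> w - y = r *\<^sub>R (c - y)" using r(2) True by simp
        have "r \<noteq> 1" using r2 vc by auto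
        from line_aux[OF this r2 ca t] yL show False by blast
      qed
    qed
  qed
  moreover have "c \<in> beliefs" using maps x0 by (simp add: c_def)
  ultimately show ?thesis by blast
qed

lemma partB:
  fixes \<phi> :: "real^'n::finite \<Rightarrow> real^'n"
  assumes n2: "CARD('n) = 2"
    and maps: "\<forall>x\<in>beliefs. \<phi> x \<in> beliefs"
    and B: "\<And>x w. x \<in> beliefs \<Longrightarrow> w \<in> beliefs \<Longrightarrow> \<phi> x \<noteq> x \<Longrightarrow> \<exists>t\<ge>1. \<phi> w - x = t *\<^sub>R (\<phi> x - x)"
  shows "\<forall>s::'n. \<exists>a b. 0 \<le> a \<and> a \<le> b \<and> b \<le> 1 \<and>
            (\<forall>x\<in>beliefs.
               (x $ s < a \<longrightarrow> \<phi> x $ s = a) \<and>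
               (a \<le> x $ s \<and> x $ s \<le> b \<longrightarrow> \<phi> x = x) \<and>
               (b < x $ s \<longrightarrow> \<phi> x $ s = b))"
proof
  fix s :: 'n
  obtain s' :: 'n where s': "s' \<noteq> s" "UNIV = {s, s'}"
  proof -
    obtain x y :: 'n where xy: "UNIV = {x, y}" "x \<noteq> y" using n2 unfolding card_2_iff by blast
    show ?thesis
    proof (cases "s = x")
      case True show ?thesis by (rule that[of y]) (use xy True in auto)
    next
      case False
      have "s \<in> {x, y}" unfolding xy(1)[symmetric] by simp
      hence "s = y" using False by simp
      show ?thesis by (rule that[of x]) (use xy \<open>s = y\<close> in auto)
    qed
  qed
  have two: "x$s' = 1 - x$s" if "x \<in> beliefs" for x
  proof -
    have "(\<Sum>\<theta>\<in>UNIV. x$\<theta>) = x$s + x$s'" unfolding s'(2) using s'(1) by simp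
    thus ?thesis using that by (simp add: beliefs_def)
  qed
  have eqv: "x = y" if "x \<in> beliefs" "y \<in> beliefs" "x$s = y$s" for x y
    unfolding vec_eq_iff
  proof
    fix i :: 'n
    have "i = s \<or> i = s'" using s'(2) by auto
    thus "x$i = y$i"
    proof
      assume "i = s" thus ?thesis using that(3) by simp
    next
      assume "i = s'" thus ?thesis using two[OF that(1)] two[OF that(2)] that(3) by simp
    qed
  qed
  have rng: "0 \<le> x$s" "x$s \<le> 1" if "x \<in> beliefs" for x
  proof -
    have "0 \<le> x$s" "0 \<le> x$s'" using that unfolding beliefs_def by blast+
    thus "0 \<le> x$s" "x$s \<le> 1" using two[OF that] by linarith+
  qed
  have up: "\<phi> w $ s \<ge> \<phi> x $ s" if x: "x \<in> beliefs" and w: "w \<in> beliefs" and u: "\<phi> x $ s > x $ s" for x w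
  proof -
    have "\<phi> x \<noteq> x" using u by auto
    then obtain t where t: "t \<ge> 1" "\<phi> w - x = t *\<^sub>R (\<phi> x - x)" using B[OF x w] by blast
    have "(\<phi> w - x) $ s = (t *\<^sub>R (\<phi> x - x)) $ s" using t(2) by (rule arg_cong)
    hence "\<phi> w $ s - x $ s = t * (\<phi> x $ s - x $ s)" by simp
    moreover have "t * (\<phi> x $ s - x $ s) \<ge> 1 * (\<phi> x $ s - x $ s)"
      using t(1) u by (intro mult_right_mono) auto
    ultimately show ?thesis by simp
  qed
  have down: "\<phi> w $ s \<le> \<phi> x $ s" if x: "x \<in> beliefs" and w: "w \<in> beliefs" and u: "\<phi> x $ s < x $ s" for x w
  proof -
    have "\<phi> x \<noteq> x" using u by auto
    then obtain t where t: "t \<ge> 1" "\<phi> w - x = t *\<^sub>R (\<phi> x - x)" using B[OF x w] by blast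
    have "(\<phi> w - x) $ s = (t *\<^sub>R (\<phi> x - x)) $ s" using t(2) by (rule arg_cong)
    hence "\<phi> w $ s - x $ s = t * (\<phi> x $ s - x $ s)" by simp
    moreover have "t * (x $ s - \<phi> x $ s) \<ge> 1 * (x $ s - \<phi> x $ s)"
      using t(1) u by (intro mult_right_mono) auto
    ultimately show ?thesis by (simp add: algebra_simps)
  qed
  define v0 :: "real^'n" where "v0 = axis s' 1"
  define v1 :: "real^'n" where "v1 = axis s 1"
  have v0: "v0 \<in> beliefs" "v0 $ s = 0" using s'(1) by (auto simp: v0_def beliefs_def axis_def)
  have v1: "v1 \<in> beliefs" "v1 $ s = 1" by (auto simp: v1_def beliefs_def axis_def)
  define a where "a = \<phi> v0 $ s"
  define b where "b = \<phi> v1 $ s"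
  have a01: "0 \<le> a" "a \<le> 1" using rng maps v0 by (auto simp: a_def)
  have b01: "0 \<le> b" "b \<le> 1" using rng maps v1 by (auto simp: b_def)
  have ab: "a \<le> b"
  proof (cases "a > 0")
    case True thus ?thesis using up[OF v0(1) v1(1)] v0 by (simp add: a_def b_def)
  next
    case False thus ?thesis using a01 b01 by simp
  qed
  show "\<exists>a b. 0 \<le> a \<and> a \<le> b \<and> b \<le> 1 \<and>
            (\<forall>x\<in>beliefs.
               (x $ s < a \<longrightarrow> \<phi> x $ s = a) \<and>
               (a \<le> x $ s \<and> x $ s \<le> b \<longrightarrow> \<phi> x = x) \<and>
               (b < x $ s \<longrightarrow> \<phi> x $ s = b))"
  proof (intro exI conjI ballI impI)
    show "0 \<le> a" "a \<le> b" "b \<le> 1" using a01 b01 ab by auto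
  next
    fix x assume x: "x \<in> beliefs" and xa: "x $ s < a"
    have "\<phi> x $ s \<ge> a" using up[OF v0(1) x] xa rng[OF x] v0 by (simp add: a_def)
    hence "\<phi> x $ s > x $ s" using xa by simp
    hence "\<phi> v0 $ s \<ge> \<phi> x $ s" by (rule up[OF x v0(1)])
    thus "\<phi> x $ s = a" using \<open>\<phi> x $ s \<ge> a\<close> by (simp add: a_def)
  next
    fix x assume x: "x \<in> beliefs" and xb: "b < x $ s"
    have "\<phi> x $ s \<le> b" using down[OF v1(1) x] xb rng[OF x] v1 by (simp add: b_def)
    hence "\<phi> x $ s < x $ s" using xb by simp
    hence "\<phi> v1 $ s \<le> \<phi> x $ s" by (rule down[OF x v1(1)])
    thus "\<phi> x $ s = b" using \<open>\<phi> x $ s \<le> b\<close> by (simp add: b_def)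
  next
    fix x assume x: "x \<in> beliefs" and xab: "a \<le> x $ s \<and> x $ s \<le> b"
    have "\<phi> x $ s = x $ s"
    proof (rule ccontr)
      assume "\<phi> x $ s \<noteq> x $ s"
      hence "\<phi> x $ s > x $ s \<or> \<phi> x $ s < x $ s" by linarith
      thus False
      proof
        assume u: "\<phi> x $ s > x $ s"
        have "\<phi> v0 $ s \<ge> \<phi> x $ s" by (rule up[OF x v0(1) u])
        thus False using u xab by (simp add: a_def)
      next
        assume u: "\<phi> x $ s < x $ s"
        have "\<phi> v1 $ s \<le> \<phi> x $ s" by (rule down[OF x v1(1) u])
        thus False using u xab by (simp add: b_def)
      qed
    qed
    thus "\<phi> x = x" using eqv maps x by blast
  qed
qed

theorem mainTheorem14:
  fixes \<mu> :: "real^'n::finite" and \<phi> :: "real^'n \<Rightarrow> real^'n"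
  assumes "CARD('n) \<ge> 2"
    and "\<mu> \<in> rel_interior beliefs"
    and "\<forall>x\<in>beliefs. \<phi> x \<in> beliefs"
    and "respects_blackwell \<mu> \<phi>"
    and "continuous_on beliefs \<phi>"
  shows "(CARD('n) \<ge> 3 \<longrightarrow>
            (\<exists>xs\<in>beliefs. \<forall>x\<in>beliefs. \<phi> x = xs) \<or> (\<forall>x\<in>beliefs. \<phi> x = x))
       \<and> (CARD('n) = 2 \<longrightarrow> (\<forall>s::'n. \<exists>a b. 0 \<le> a \<and> a \<le> b \<and> b \<le> 1 \<and>
            (\<forall>x\<in>beliefs.
               (x $ s < a \<longrightarrow> \<phi> x $ s = a) \<and>
               (a \<le> x $ s \<and> x $ s \<le> b \<longrightarrow> \<phi> x = x) \<and>
               (b < x $ s \<longrightarrow> \<phi> x $ s = b))))"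
proof -
  note mu = rel_interior_pos[OF assms(2)]
  have B: "\<And>x w. x \<in> beliefs \<Longrightarrow> w \<in> beliefs \<Longrightarrow> \<phi> x \<noteq> x \<Longrightarrow> \<exists>t\<ge>1. \<phi> w - x = t *\<^sub>R (\<phi> x - x)"
    by (rule lemmaB[OF mu(2) mu(1) assms(4) assms(5) assms(3)])
  show ?thesis
    using partA[OF _ assms(3) B] partB[OF _ assms(3) B] by blast
qed

end
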